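(* For every integer $m\ge0$ and $n\ge0$, $$x^n=\sum_{k=0}^{\lfloor n/2\rfloor}\frac{[n]!}{[k]!\,[n-2k]!}\,\frac{[n+m-2k]!}{[n+m-k]!}\,\frac{q^ks^k}{(-q;q)_k\,(-q^{n+m+1-2k};q)_k}\,v_{n-2k}(x,m,s,q).$$ Consequently, if $\Phi_{m,q}$ is the linear functional on polynomials in $x$ determined by $\Phi_{m,q}(v_n(x,m,1,q))=[n=0]$ for all $n\ge 0$, then $\Phi_{m,q}(x^{2n+1})=0$ and $$\Phi_{m,q}(x^{2n})=\frac{q^n}{(-q;q)_n\,(-q^{m+1};q)_n}\cdot\frac{[2n]!\,[m]!}{[n]!\,[m+n]!}\quad(n\ge0).$$
   Context: $q$ is an indeterminate; $[n]=\frac{1-q^n}{1-q}$, $[n]!=[1]\cdots[n]$, $[0]!=1$, $(a;q)_n=(1-a)(1-qa)\cdots(1-q^{n-1}a)$, $(a;q)_0=1$. For an integer $m\ge 0$ and indeterminates $x,s$, $$v_n(x,m,s,q)=\sum_{k=0}^{\lfloor n/2\rfloor}(-s)^kq^{k^2}\frac{[n]!}{[k]!\,[n-2k]!}\,\frac{[m+n-k-1]!}{[m+n-1]!}\,\frac{1}{(-q;q)_k\,(-q^{n+m-k};q)_k}\,x^{n-2k}\quad(n\ge1),\qquad v_0=1.$$ $[P]$ is the Iverson bracket. *)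

theory Defs
  imports "HOL-Computational_Algebra.Polynomial"
begin

definition qint :: "'a::field \<Rightarrow> nat \<Rightarrow> 'a" where
  "qint q n = (\<Sum>i<n. q ^ i)"

definition qfact :: "'a::field \<Rightarrow> nat \<Rightarrow> 'a" where
  "qfact q n = (\<Prod>i=1..n. qint q i)"

definition qpoch :: "'a::field \<Rightarrow> 'a \<Rightarrow> nat \<Rightarrow> 'a" where
  "qpoch a q n = (\<Prod>i<n. (1 - q ^ i * a))"

definition vpoly :: "nat \<Rightarrow> 'a::field \<Rightarrow> 'a \<Rightarrow> nat \<Rightarrow> 'a poly" where
  "vpoly m s q n =
    (if n = 0 then 1 else
     (\<Sum>k=0..n div 2.
        smult ((- s) ^ k * q ^ (k ^ 2)
               * (qfact q n / (qfact q k * qfact q (n - 2 * k)))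
               * (qfact q (m + n - k - 1) / qfact q (m + n - 1))
               / (qpoch (- q) q k * qpoch (- (q ^ (n + m - k))) q k))
              (monom 1 (n - 2 * k))))"

definition lin_functional :: "('a::field poly \<Rightarrow> 'a) \<Rightarrow> bool" where
  "lin_functional \<Phi> \<longleftrightarrow>
     (\<forall>p r. \<Phi> (p + r) = \<Phi> p + \<Phi> r) \<and> (\<forall>c p. \<Phi> (smult c p) = c * \<Phi> p)"

end

theory Submission imports Defs begin

lemma qint_Suc: "qint q (Suc n) = qint q n + q ^ n"
  by (simp add: qint_def)

lemma qint_add: "qint q (a + b) = qint q a + q ^ a * qint q b"
  by (induction b) (simp_all add: qint_Suc qint_def[of q 0] algebra_simps power_add)

lemma qint_double: "qint q (2 * t) = qint q t * (1 + q ^ t)"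
  unfolding mult_2 qint_add by (simp add: algebra_simps)

lemma qint_core: "qint q (u + c) * qint q (z + u) = qint q u * qint q (z + u + c) + q ^ u * qint q c * qint q z"
  by (simp add: qint_add power_add algebra_simps)

lemma qfact_Suc: "qfact q (Suc n) = qfact q n * qint q (Suc n)"
  by (simp add: qfact_def prod.nat_ivl_Suc' mult.commute)

lemma qfact_0[simp]: "qfact q 0 = 1" by (simp add: qfact_def)

lemma qfact_add: "qfact q (a + k) = qfact q a * (\<Prod>i<k. qint q (a + 1 + i))"
  by (induction k) (simp_all add: qfact_Suc)

lemma qpoch_Suc: "qpoch a q (Suc n) = qpoch a q n * (1 - q ^ n * a)"
  by (simp add: qpoch_def)

definition Epr :: "'a::field \<Rightarrow> nat \<Rightarrow> 'a" where
  "Epr q k = (\<Prod>i<k. qint q (2 * (i + 1)))"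
definition Wpr :: "'a::field \<Rightarrow> nat \<Rightarrow> nat \<Rightarrow> 'a" where
  "Wpr q a k = (\<Prod>i<k. qint q (2 * (a + i)))"

lemma Epr_Suc: "Epr q (Suc k) = Epr q k * qint q (2 * (k + 1))"
  by (simp add: Epr_def)
lemma Wpr_Suc: "Wpr q a (Suc k) = Wpr q a k * qint q (2 * (a + k))"
  by (simp add: Wpr_def)
lemma Wpr_Suc': "Wpr q a (Suc k) = qint q (2 * a) * Wpr q (Suc a) k"
  unfolding Wpr_def prod.lessThan_Suc_shift by simp

lemma qfact_prod: "qfact q k = (\<Prod>i<k. qint q (i + 1))"
  by (induction k) (simp_all add: qfact_Suc)

lemma Epr_eq: "qfact q k * qpoch (- q) q k = Epr q k"
proof -
  have "qfact q k * qpoch (- q) q k = (\<Prod>i<k. qint q (i + 1) * (1 + q ^ (i + 1)))"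
    unfolding qfact_prod qpoch_def prod.distrib[symmetric] by (simp add: mult.commute)
  also have "\<dots> = Epr q k" unfolding Epr_def qint_double ..
  finally show ?thesis .
qed

lemma Wpr_eq: "(\<Prod>i<k. qint q (a + i)) * qpoch (- (q ^ a)) q k = Wpr q a k"
proof -
  have "(\<Prod>i<k. qint q (a + i)) * qpoch (- (q ^ a)) q k = (\<Prod>i<k. qint q (a + i) * (1 + q ^ (a + i)))"
    unfolding qpoch_def prod.distrib[symmetric] by (simp add: power_add mult.commute)
  also have "\<dots> = Wpr q a k" unfolding Wpr_def qint_double ..
  finally show ?thesis .
qed

definition Ac :: "nat \<Rightarrow> 'a::field \<Rightarrow> 'a \<Rightarrow> nat \<Rightarrow> nat \<Rightarrow> 'a" where
  "Ac m s q n k = (if n = 0 then (if k = 0 then 1 else 0) else if k \<le> n div 2 then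
     (- s) ^ k * q ^ (k ^ 2) * qfact q n / (qfact q (n - 2 * k) * Epr q k * Wpr q (n + m - k) k) else 0)"

definition Bc :: "nat \<Rightarrow> 'a::field \<Rightarrow> 'a \<Rightarrow> nat \<Rightarrow> nat \<Rightarrow> 'a" where
  "Bc m s q n j = (if j \<le> n div 2 then
     q ^ j * s ^ j * qfact q n / (qfact q (n - 2 * j) * Epr q j * Wpr q (n + m + 1 - 2 * j) j) else 0)"

definition dco :: "nat \<Rightarrow> 'a::field \<Rightarrow> 'a \<Rightarrow> nat \<Rightarrow> 'a" where
  "dco m s q n = (if n = 0 then 0 else if n = 1 then s * q / qint q (2 * m + 2) else
     s * q ^ n * qint q n * qint q (n + 2 * m - 1) / (qint q (2 * m + 2 * n) * qint q (2 * m + 2 * n - 2)))"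

locale qset =
  fixes q :: "'a::field"
  assumes qint_nz: "\<And>j. j \<ge> 1 \<Longrightarrow> qint q j \<noteq> 0"
      and qpow_nz: "\<And>j. j \<ge> 1 \<Longrightarrow> 1 + q ^ j \<noteq> 0"
begin

lemma qint_nz'[simp]: "1 \<le> j \<Longrightarrow> qint q j \<noteq> 0" using qint_nz by blast
lemma qpow_nz'[simp]: "1 \<le> j \<Longrightarrow> 1 + q ^ j \<noteq> 0" using qpow_nz by blast

lemma qfact_nz[simp]: "qfact q n \<noteq> 0"
  by (induction n) (simp_all add: qfact_Suc)

lemma Epr_nz[simp]: "Epr q k \<noteq> 0"
  by (simp add: Epr_def)

lemma Wpr_nz[simp]: "1 \<le> a \<Longrightarrow> Wpr q a k \<noteq> 0"
  by (simp add: Wpr_def)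

lemma qpoch_nz1[simp]: "qpoch (- q) q k \<noteq> 0"
proof -
  have "\<And>i. 1 + q * q ^ i \<noteq> 0" using qpow_nz'[of "Suc _"] by simp
  thus ?thesis by (simp add: qpoch_def mult.commute)
qed

lemma qpoch_nz2[simp]: "1 \<le> a \<Longrightarrow> qpoch (- (q ^ a)) q k \<noteq> 0"
proof -
  assume a: "1 \<le> a"
  have "qpoch (- (q ^ a)) q k = (\<Prod>i<k. 1 + q ^ (a + i))" by (simp add: qpoch_def power_add mult.commute)
  thus ?thesis using a by simp
qed

lemma Ac_conv:
  assumes n: "1 \<le> n" and k: "k \<le> n div 2"
  shows "(- s) ^ k * q ^ (k ^ 2) * (qfact q n / (qfact q k * qfact q (n - 2 * k)))
               * (qfact q (m + n - k - 1) / qfact q (m + n - 1))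
               / (qpoch (- q) q k * qpoch (- (q ^ (n + m - k))) q k) = Ac m s q n k"
proof -
  define a where "a = n + m - k"
  have a1: "1 \<le> a" using n k unfolding a_def by linarith
  have e1: "m + n - k - 1 + k = m + n - 1" using n k by linarith
  have e2: "\<And>i. m + n - k - 1 + 1 + i = a + i" using n k unfolding a_def by linarith
  have h: "qfact q (m + n - 1) = qfact q (m + n - k - 1) * (\<Prod>i<k. qint q (a + i))"
    using qfact_add[of q "m + n - k - 1" k] unfolding e1 e2 .
  have E: "Epr q k = qfact q k * qpoch (- q) q k" using Epr_eq by metis
  have W: "Wpr q a k = (\<Prod>i<k. qint q (a + i)) * qpoch (- (q ^ a)) q k" using Wpr_eq by metis
  have P: "(\<Prod>i<k. qint q (a + i)) \<noteq> 0" using a1 by simp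
  show ?thesis using n k a1 P
    unfolding Ac_def h E a_def[symmetric] W by (simp add: field_simps)
qed

lemma Bc_conv:
  assumes j: "j \<le> n div 2"
  shows "(qfact q n / (qfact q j * qfact q (n - 2 * j)))
                      * (qfact q (n + m - 2 * j) / qfact q (n + m - j))
                      * (q ^ j * s ^ j
                         / (qpoch (- q) q j * qpoch (- (q ^ (n + m + 1 - 2 * j))) q j)) = Bc m s q n j"
proof -
  define a where "a = n + m + 1 - 2 * j"
  have j2: "2 * j \<le> n" using j by presburger
  have a1: "1 \<le> a" unfolding a_def using j2 by linarith
  have e1: "n + m - 2 * j + j = n + m - j" using j2 by linarith
  have e2: "\<And>i. n + m - 2 * j + 1 + i = a + i" using j2 unfolding a_def by linarith
  have h: "qfact q (n + m - j) = qfact q (n + m - 2 * j) * (\<Prod>i<j. qint q (a + i))"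
    using qfact_add[of q "n + m - 2 * j" j] unfolding e1 e2 .
  have E: "Epr q j = qfact q j * qpoch (- q) q j" using Epr_eq by metis
  have W: "Wpr q a j = (\<Prod>i<j. qint q (a + i)) * qpoch (- (q ^ a)) q j" using Wpr_eq by metis
  have P: "(\<Prod>i<j. qint q (a + i)) \<noteq> 0" using a1 by simp
  show ?thesis using j a1 P j2
    unfolding Bc_def h E a_def[symmetric] W by (simp add: field_simps)
qed

lemma Ac_gen:
  assumes "1 \<le> n" "k \<le> n div 2" "n - 2 * k = r" "n + m - k = a"
  shows "Ac m s q n k = (- s) ^ k * q ^ (k ^ 2) * qfact q n / (qfact q r * Epr q k * Wpr q a k)"
  using assms unfolding Ac_def by auto

lemma qfact_pred: "1 \<le> n \<Longrightarrow> qfact q n = qfact q (n - 1) * qint q n"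
  using qfact_Suc[of q "n - 1"] by simp

lemma R_gen:
  assumes k: "k = Suc K" and n: "n = 2 * K + 2 + r"
  shows "Ac m s q n k = Ac m s q (Suc n) k + dco m s q n * Ac m s q (n - 1) K"
proof -
  define a where "a = n + m - k"
  define N where "N = n + m"
  define F where "F = qfact q (n - 1)"
  define W where "W = Wpr q (Suc a) K"
  define Z where "Z = (- s) ^ K * q ^ (K ^ 2) * F / (qfact q r * Epr q K * W)"
  define z where "z = n + 2 * m - 1"
  have a1: "1 \<le> a" unfolding a_def using k n by simp
  have W0: "W \<noteq> 0" unfolding W_def by simp
  have F1: "qfact q n = F * qint q n" unfolding F_def using qfact_pred[of n] n by simp
  have F2: "qfact q (Suc n) = F * qint q n * qint q (Suc n)" using F1 qfact_Suc[of q n] by simp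
  have r1: "qfact q (Suc r) = qfact q r * qint q (Suc r)" by (rule qfact_Suc)
  have E1: "Epr q k = Epr q K * qint q (2 * K + 2)" unfolding k Epr_Suc by simp
  have W1: "Wpr q (Suc a) k = W * qint q (2 * N)"
    unfolding k Wpr_Suc W_def using a_def N_def k n by (simp add: algebra_simps)
  have W2: "Wpr q a k = qint q (2 * a) * W" unfolding k Wpr_Suc' W_def ..
  have W3: "Wpr q a K * qint q (2 * N - 2) = qint q (2 * a) * W"
    using Wpr_Suc[of q a K] Wpr_Suc'[of q a K] unfolding W_def using a_def N_def k n
    by (simp add: algebra_simps)
  have W3': "Wpr q a K = qint q (2 * a) * W / qint q (2 * N - 2)"
    using W3 n N_def by (simp add: field_simps)
  have pk: "q ^ (k ^ 2) = q ^ (K ^ 2) * q ^ (2 * K + 1)"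
  proof -
    have "k ^ 2 = K ^ 2 + (2 * K + 1)" unfolding k by (simp add: power2_eq_square)
    thus ?thesis by (simp add: power_add)
  qed
  have sk: "(- s) ^ k = (- s) ^ K * (- s)" unfolding k by simp
  have qn: "q ^ n = q ^ (2 * K + 1) * q ^ (Suc r)" unfolding n by (simp add: power_add[symmetric])
  define X where "X = (- s) * q ^ (2 * K + 1) * qint q n * qint q (Suc n)
      / (qint q (Suc r) * qint q (2 * K + 2) * qint q (2 * N))"
  define V where "V = (- s) * q ^ (2 * K + 1) * qint q n / (qint q (2 * K + 2) * qint q (2 * a))"
  define Y where "Y = qint q (2 * N - 2) / (qint q (Suc r) * qint q (2 * a))"
  define d where "d = s * q ^ n * qint q n * qint q z / (qint q (2 * N) * qint q (2 * N - 2))"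
  have hA1: "Ac m s q (Suc n) k = Z * X"
  proof -
    have "Ac m s q (Suc n) k = (- s) ^ k * q ^ (k ^ 2) * qfact q (Suc n) / (qfact q (Suc r) * Epr q k * Wpr q (Suc a) k)"
      by (rule Ac_gen) (use k n a_def in presburger)+
    also have "\<dots> = Z * X" unfolding F2 r1 E1 W1 pk sk Z_def X_def
      using W0 N_def n by (simp add: field_simps)
    finally show ?thesis .
  qed
  have hA0: "Ac m s q n k = Z * V"
  proof -
    have "Ac m s q n k = (- s) ^ k * q ^ (k ^ 2) * qfact q n / (qfact q r * Epr q k * Wpr q a k)"
      by (rule Ac_gen) (use k n a_def in presburger)+
    also have "\<dots> = Z * V" unfolding F1 E1 W2 pk sk Z_def V_def
      using W0 a1 by (simp add: field_simps)
    finally show ?thesis .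
  qed
  have hA2: "Ac m s q (n - 1) K = Z * Y"
  proof -
    have "Ac m s q (n - 1) K = (- s) ^ K * q ^ (K ^ 2) * qfact q (n - 1) / (qfact q (Suc r) * Epr q K * Wpr q a K)"
      by (rule Ac_gen) (use k n a_def in presburger)+
    also have "\<dots> = Z * Y" unfolding r1 W3' Z_def Y_def F_def[symmetric]
      using W0 a1 N_def n by (simp add: field_simps)
    finally show ?thesis .
  qed
  have hd: "dco m s q n = d"
  proof -
    have "2 * m + 2 * n = 2 * N" "2 * m + 2 * n - 2 = 2 * N - 2" "n + 2 * m - 1 = z"
      unfolding N_def z_def by simp_all
    thus ?thesis unfolding dco_def d_def using n by simp
  qed
  have core: "qint q (Suc n) * qint q (2 * a) = qint q (Suc r) * qint q (2 * N) + q ^ (Suc r) * qint q (2 * K + 2) * qint q z"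
  proof -
    have e1: "Suc r + (2 * K + 2) = Suc n" and e2: "z + Suc r = 2 * a" and e3: "2 * a + (2 * K + 2) = 2 * N"
      using n k unfolding a_def z_def N_def by simp_all
    show ?thesis using qint_core[of q "Suc r" "2 * K + 2" z] unfolding e1 e2 e3 .
  qed
  define \<alpha> where "\<alpha> = qint q (Suc n) * qint q (2 * a) / (qint q (Suc r) * qint q (2 * N))"
  define \<beta> where "\<beta> = - (q ^ (Suc r) * qint q (2 * K + 2) * qint q z) / (qint q (Suc r) * qint q (2 * N))"
  have N1: "1 \<le> 2 * N - 2" unfolding N_def using n by simp
  have hX: "X = V * \<alpha>" unfolding X_def V_def \<alpha>_def using a1 N1 by (simp add: field_simps)
  have hY: "d * Y = V * \<beta>" unfolding d_def Y_def V_def \<beta>_def qn using a1 N1 by (simp add: field_simps)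
  have hab: "\<alpha> + \<beta> = 1" unfolding \<alpha>_def \<beta>_def using core a1 N1
    by (simp add: field_simps)
  have "Ac m s q n k = Z * V * (\<alpha> + \<beta>)" using hA0 hab by simp
  also have "\<dots> = Z * X + d * (Z * Y)" using hX hY by (simp add: algebra_simps)
  finally show ?thesis using hA1 hA2 hd by simp
qed

lemma R_bd:
  assumes k: "k = Suc K" and n: "n = 2 * K + 1" and K: "1 \<le> K"
  shows "Ac m s q (Suc n) k + dco m s q n * Ac m s q (n - 1) K = 0"
proof -
  define a where "a = m + K + 1"
  define b where "b = m + K"
  define W where "W = Wpr q a K"
  define Z where "Z = (- s) ^ K * q ^ (K ^ 2) * qfact q (n - 1) / (Epr q K * W)"
  have W0: "W \<noteq> 0" unfolding W_def a_def by simp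
  have b1: "1 \<le> b" unfolding b_def using K by simp
  have F2: "qfact q (Suc n) = qfact q (n - 1) * qint q n * qint q (Suc n)"
    using qfact_pred[of n] qfact_Suc[of q n] n by simp
  have E1: "Epr q k = Epr q K * qint q (2 * K + 2)" unfolding k Epr_Suc by simp
  have W1: "Wpr q a k = W * qint q (2 * (a + K))" unfolding k Wpr_Suc W_def ..
  have W3: "Wpr q b K * qint q (2 * (b + K)) = qint q (2 * b) * W"
    using Wpr_Suc[of q b K] Wpr_Suc'[of q b K] unfolding W_def a_def b_def by simp
  have W3': "Wpr q b K = qint q (2 * b) * W / qint q (2 * (b + K))"
    using W3 b1 by (simp add: field_simps)
  have pk: "q ^ (k ^ 2) = q ^ (K ^ 2) * q ^ (2 * K + 1)"
  proof -
    have "k ^ 2 = K ^ 2 + (2 * K + 1)" unfolding k by (simp add: power2_eq_square)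
    thus ?thesis by (simp add: power_add)
  qed
  have sk: "(- s) ^ k = (- s) ^ K * (- s)" unfolding k by simp
  have hA1: "Ac m s q (Suc n) k = Z * ((- s) * q ^ (2 * K + 1) * qint q n * qint q (Suc n) / (qint q (2 * K + 2) * qint q (2 * (a + K))))"
  proof -
    have eq: "Ac m s q (Suc n) k = (- s) ^ k * q ^ (k ^ 2) * qfact q (Suc n) / (qfact q 0 * Epr q k * Wpr q a k)"
      by (rule Ac_gen) (use k n a_def in presburger)+
    show ?thesis unfolding eq F2 E1 W1 pk sk Z_def
      using W0 by (simp add: field_simps)
  qed
  have hA2: "Ac m s q (n - 1) K = Z * (qint q (2 * (b + K)) / qint q (2 * b))"
  proof -
    have eq: "Ac m s q (n - 1) K = (- s) ^ K * q ^ (K ^ 2) * qfact q (n - 1) / (qfact q 0 * Epr q K * Wpr q b K)"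
      by (rule Ac_gen) (use k n b_def K in presburger)+
    show ?thesis unfolding eq W3' Z_def
      using W0 b1 by (simp add: field_simps)
  qed
  have hd: "dco m s q n = s * q ^ (2 * K + 1) * qint q n * qint q (2 * b) / (qint q (2 * (a + K)) * qint q (2 * (b + K)))"
  proof -
    have e1: "2 * m + 2 * n = 2 * (a + K)" and e2: "2 * (a + K) - 2 = 2 * (b + K)" and e3: "n + 2 * m - 1 = 2 * b"
      unfolding a_def b_def n by simp_all
    have "n \<noteq> 0" "n \<noteq> 1" using n K by simp_all
    thus ?thesis unfolding dco_def e1 e2 e3 using n by simp
  qed
  have e: "Suc n = 2 * K + 2" using n by simp
  show ?thesis unfolding hA1 hA2 hd unfolding e using b1 by (simp add: field_simps)
qed

lemma R_one: "Ac m s q 2 1 + dco m s q 1 * Ac m s q 0 0 = 0"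
proof -
  have "Ac m s q 2 1 = (- s) ^ 1 * q ^ (1 ^ 2) * qfact q 2 / (qfact q 0 * Epr q 1 * Wpr q (m + 1) 1)"
    by (rule Ac_gen) simp_all
  also have "\<dots> = - s * q / qint q (2 * m + 2)"
  proof -
    have "qfact q 2 = qint q 2" by (simp add: qfact_def qint_def numeral_2_eq_2)
    moreover have "Epr q 1 = qint q 2" "Wpr q (m + 1) 1 = qint q (2 * m + 2)" by (simp_all add: Epr_def Wpr_def)
    ultimately show ?thesis by (simp add: field_simps)
  qed
  finally show ?thesis by (simp add: dco_def Ac_def)
qed

lemma Ac_0: "Ac m s q n 0 = 1"
  by (simp add: Ac_def Epr_def Wpr_def)

lemma Rrec: "Ac m s q n k = Ac m s q (Suc n) k + (if k = 0 then 0 else dco m s q n * Ac m s q (n - 1) (k - 1))"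
proof (cases k)
  case 0
  then show ?thesis by (simp add: Ac_0)
next
  case (Suc K)
  show ?thesis
  proof (cases "n = 0")
    case True
    then show ?thesis using Suc by (simp add: Ac_def dco_def)
  next
    case n0: False
    show ?thesis
    proof (cases "n + 1 < 2 * k")
      case True
      have "\<not> k \<le> n div 2" "\<not> k \<le> Suc n div 2" "\<not> K \<le> (n - 1) div 2" "n - 1 = 0 \<longrightarrow> K \<noteq> 0"
        using True Suc n0 by presburger+
      then show ?thesis using Suc n0 by (simp add: Ac_def)
    next
      case False
      show ?thesis
      proof (cases "n = 2 * K + 1")
        case nK: True
        have A0: "Ac m s q n k = 0" using nK Suc by (simp add: Ac_def)
        show ?thesis
        proof (cases "K = 0")
          case True
          then have e: "Suc n = 2" "n - 1 = 0" "k = 1" "k - 1 = 0" "n = 1" using nK Suc by simp_all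
          have X: "Ac m s q 1 1 = 0" using A0 unfolding e(3) e(5) .
          have Y: "Ac m s q 2 1 + dco m s q 1 * Ac m s q 0 0 = 0" by (rule R_one)
          have nk: "n = 1" "k = 1" using nK Suc True by simp_all
          have X: "Ac m s q 1 1 = 0" using A0 unfolding nk .
          have Y: "Ac m s q 2 1 + dco m s q 1 * Ac m s q 0 0 = 0" by (rule R_one)
          have t: "Suc 1 = (2::nat)" by simp
          have h1: "Ac m s q (Suc n) k = Ac m s q 2 1" unfolding nk t ..
          have h2: "Ac m s q (n - 1) (k - 1) = Ac m s q 0 0" unfolding nk by simp
          have h3: "dco m s q n = dco m s q 1" "Ac m s q n k = Ac m s q 1 1" "k \<noteq> 0" unfolding nk by simp_all
          show ?thesis unfolding A0 if_not_P[OF h3(3)] h1 h2 h3(1) by (rule Y[symmetric])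
        next
          case False
          then show ?thesis using R_bd[of k K n m s] A0 nK Suc by simp
        qed
      next
        case nK: False
        have "2 * K + 2 \<le> n" using False nK Suc by linarith
        then obtain r where "n = 2 * K + 2 + r" using le_Suc_ex by blast
        then show ?thesis using R_gen[of k K n r m s] Suc by simp
      qed
    qed
  qed
qed

lemma Bc_gen:
  assumes "j \<le> n div 2" "n - 2 * j = r" "n + m + 1 - 2 * j = a"
  shows "Bc m s q n j = q ^ j * s ^ j * qfact q n / (qfact q r * Epr q j * Wpr q a j)"
  using assms unfolding Bc_def by auto

lemma Bc_0: "Bc m s q n 0 = 1"
  by (simp add: Bc_def Epr_def Wpr_def)

lemma B_gen:
  assumes j: "j = Suc J" and n: "n = 2 * J + 2 + r"
  shows "Bc m s q (Suc n) j = Bc m s q n j + dco m s q (n + 2 - 2 * j) * Bc m s q n J"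
proof -
  define c where "c = m + r + 1"
  define z where "z = r + 2 * m + 1"
  define W where "W = Wpr q (c + 2) J"
  define Z where "Z = (q * s) ^ J * qfact q n / (qfact q r * Epr q J * W)"
  have W0: "W \<noteq> 0" unfolding W_def by simp
  have c1: "1 \<le> c" unfolding c_def by simp
  have F2: "qfact q (Suc n) = qfact q n * qint q (Suc n)" by (rule qfact_Suc)
  have r2: "qfact q (r + 2) = qfact q r * qint q (Suc r) * qint q (Suc (Suc r))"
    using qfact_Suc[of q r] qfact_Suc[of q "Suc r"] by simp
  have r1: "qfact q (Suc r) = qfact q r * qint q (Suc r)" by (rule qfact_Suc)
  have E1: "Epr q j = Epr q J * qint q (2 * J + 2)" unfolding j Epr_Suc by simp
  have W1: "Wpr q (c + 1) j = qint q (2 * (c + 1)) * W"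
    unfolding j Wpr_Suc' W_def by simp
  have W3: "Wpr q (c + 1) J * qint q (2 * (c + 1 + J)) = qint q (2 * (c + 1)) * W"
    using Wpr_Suc[of q "c + 1" J] Wpr_Suc'[of q "c + 1" J] unfolding W_def by simp
  have W2: "Wpr q c j = qint q (2 * c) * qint q (2 * (c + 1)) * W / qint q (2 * (c + 1 + J))"
  proof -
    have "Wpr q c j = qint q (2 * c) * Wpr q (c + 1) J" unfolding j Wpr_Suc' by simp
    thus ?thesis using W3 by (simp add: field_simps)
  qed
  have pj: "(q * s) ^ j = (q * s) ^ J * (q * s)" unfolding j by simp
  define X where "X = q * s * qint q (Suc n) / (qint q (Suc r) * qint q (2 * J + 2) * qint q (2 * (c + 1)))"
  define V where "V = q * s * qint q (2 * (c + 1 + J)) / (qint q (2 * J + 2) * qint q (2 * c) * qint q (2 * (c + 1)))"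
  define Y where "Y = 1 / (qint q (Suc r) * qint q (Suc (Suc r)))"
  define d where "d = s * q ^ (r + 2) * qint q (r + 2) * qint q z / (qint q (2 * (c + 1)) * qint q (2 * c))"
  have hB1: "Bc m s q (Suc n) j = Z * X"
  proof -
    have eq: "Bc m s q (Suc n) j = q ^ j * s ^ j * qfact q (Suc n) / (qfact q (Suc r) * Epr q j * Wpr q (c + 1) j)"
      by (rule Bc_gen) (use j n c_def in presburger)+
    show ?thesis unfolding eq F2 r1 E1 W1 power_mult_distrib[symmetric] pj Z_def X_def
      using W0 c1 by (simp add: field_simps)
  qed
  have hB0: "Bc m s q n j = Z * V"
  proof -
    have eq: "Bc m s q n j = q ^ j * s ^ j * qfact q n / (qfact q r * Epr q j * Wpr q c j)"
      by (rule Bc_gen) (use j n c_def in presburger)+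
    show ?thesis unfolding eq E1 W2 power_mult_distrib[symmetric] pj Z_def V_def
      using W0 c1 by (simp add: field_simps)
  qed
  have hB2: "Bc m s q n J = Z * Y"
  proof -
    have eq: "Bc m s q n J = q ^ J * s ^ J * qfact q n / (qfact q (r + 2) * Epr q J * Wpr q (c + 2) J)"
      by (rule Bc_gen) (use j n c_def in presburger)+
    show ?thesis unfolding eq r2 power_mult_distrib[symmetric] Z_def Y_def W_def[symmetric]
      using W0 c1 by (simp add: field_simps)
  qed
  have hd: "dco m s q (n + 2 - 2 * j) = d"
  proof -
    have e0: "n + 2 - 2 * j = r + 2" using n j by simp
    have e1: "2 * m + 2 * (r + 2) = 2 * (c + 1)" and e2: "2 * (c + 1) - 2 = 2 * c" and e3: "r + 2 + 2 * m - 1 = z"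
      unfolding c_def z_def by simp_all
    show ?thesis unfolding e0 dco_def e1 e2 e3 d_def by simp
  qed
  have core: "qint q (Suc n) * qint q (2 * c) = qint q (Suc r) * qint q (2 * (c + 1 + J)) + q ^ (Suc r) * qint q (2 * J + 2) * qint q z"
  proof -
    have e1: "Suc r + (2 * J + 2) = Suc n" and e2: "z + Suc r = 2 * c" and e3: "2 * c + (2 * J + 2) = 2 * (c + 1 + J)"
      using n j unfolding c_def z_def by simp_all
    show ?thesis using qint_core[of q "Suc r" "2 * J + 2" z] unfolding e1 e2 e3 .
  qed
  define \<alpha> where "\<alpha> = qint q (Suc r) * qint q (2 * (c + 1 + J)) / (qint q (Suc n) * qint q (2 * c))"
  define \<beta> where "\<beta> = q ^ (Suc r) * qint q (2 * J + 2) * qint q z / (qint q (Suc n) * qint q (2 * c))"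
  have qr: "q ^ (r + 2) = q * q ^ (Suc r)" by simp
  have hV: "V = X * \<alpha>" unfolding X_def V_def \<alpha>_def using c1 by (simp add: field_simps)
  have hY: "d * Y = X * \<beta>" unfolding d_def Y_def X_def \<beta>_def qr using c1
    by (simp add: field_simps numeral_2_eq_2)
  have hab: "\<alpha> + \<beta> = 1"
  proof -
    have "\<alpha> + \<beta> = (qint q (Suc r) * qint q (2 * (c + 1 + J)) + q ^ (Suc r) * qint q (2 * J + 2) * qint q z) / (qint q (Suc n) * qint q (2 * c))"
      unfolding \<alpha>_def \<beta>_def by (simp add: add_divide_distrib)
    also have "\<dots> = 1" unfolding core[symmetric] using c1 by simp
    finally show ?thesis .
  qed
  have "Bc m s q (Suc n) j = Z * X * (\<alpha> + \<beta>)" using hB1 hab by simp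
  also have "\<dots> = Z * V + d * (Z * Y)" using hV hY by (simp add: algebra_simps)
  finally show ?thesis using hB0 hB2 hd by simp
qed

lemma B_bd:
  assumes j: "j = Suc J" and n: "n = 2 * J + 1"
  shows "Bc m s q (Suc n) j = dco m s q (n + 2 - 2 * j) * Bc m s q n J"
proof -
  define W where "W = Wpr q (m + 2) J"
  have W0: "W \<noteq> 0" unfolding W_def by simp
  have eq1: "Bc m s q (Suc n) j = q ^ j * s ^ j * qfact q (Suc n) / (qfact q 0 * Epr q j * Wpr q (m + 1) j)"
    by (rule Bc_gen) (use j n in presburger)+
  have eq2: "Bc m s q n J = q ^ J * s ^ J * qfact q n / (qfact q 1 * Epr q J * W)"
    unfolding W_def by (rule Bc_gen) (use j n in presburger)+
  have E1: "Epr q j = Epr q J * qint q (2 * J + 2)" unfolding j Epr_Suc by simp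
  have W1: "Wpr q (m + 1) j = qint q (2 * m + 2) * W" unfolding j Wpr_Suc' W_def by simp
  have F2: "qfact q (Suc n) = qfact q n * qint q (2 * J + 2)" using qfact_Suc[of q n] n by simp
  have f1: "qfact q 1 = 1" by (simp add: qfact_def qint_def)
  have e0: "n + 2 - 2 * j = 1" using n j by simp
  have hd: "dco m s q 1 = s * q / qint q (2 * m + 2)" by (simp add: dco_def)
  show ?thesis unfolding eq1 eq2 E1 W1 F2 f1 e0 hd unfolding j using W0 by (simp add: field_simps)
qed

lemma Brec: "Bc m s q (Suc n) j = Bc m s q n j + (if j = 0 then 0 else dco m s q (n + 2 - 2 * j) * Bc m s q n (j - 1))"
proof (cases j)
  case 0
  then show ?thesis by (simp add: Bc_0)
next
  case (Suc J)
  show ?thesis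
  proof (cases "n + 1 < 2 * j")
    case True
    have "\<not> j \<le> n div 2" "\<not> j \<le> Suc n div 2" "J \<le> n div 2 \<longrightarrow> n + 2 - 2 * j = 0"
      using True Suc by presburger+
    then show ?thesis using Suc by (auto simp add: Bc_def dco_def)
  next
    case False
    show ?thesis
    proof (cases "n = 2 * J + 1")
      case nJ: True
      have B0: "Bc m s q n j = 0" using nJ Suc by (simp add: Bc_def)
      show ?thesis using B_bd[of j J n m s] B0 Suc nJ by simp
    next
      case nJ: False
      have "2 * J + 2 \<le> n" using False nJ Suc by linarith
      then obtain r where "n = 2 * J + 2 + r" using le_Suc_ex by blast
      then show ?thesis using B_gen[of j J n r m s] Suc by simp
    qed
  qed
qed

lemma vpoly_alt:
  assumes N: "n \<le> N"
  shows "vpoly m s q n = (\<Sum>k\<le>N. smult (Ac m s q n k) (monom 1 (n - 2 * k)))"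
proof (cases "n = 0")
  case True
  have "(\<Sum>k\<le>N. smult (Ac m s q n k) (monom 1 (n - 2 * k))) = (\<Sum>k\<le>N. if k = 0 then 1 else 0)"
    by (rule sum.cong) (simp_all add: Ac_def True)
  also have "\<dots> = 1" by (simp add: sum.delta')
  finally show ?thesis using True by (simp add: vpoly_def)
next
  case False
  have "vpoly m s q n = (\<Sum>k=0..n div 2. smult (Ac m s q n k) (monom 1 (n - 2 * k)))"
    unfolding vpoly_def if_not_P[OF False]
    by (rule sum.cong[OF refl], subst Ac_conv) (use False in auto)
  also have "\<dots> = (\<Sum>k\<le>N. smult (Ac m s q n k) (monom 1 (n - 2 * k)))"
    by (rule sum.mono_neutral_left) (use N in \<open>auto simp: Ac_def\<close>)
  finally show ?thesis .
qed

lemma smult_sum_right: "smult c (sum f A) = (\<Sum>x\<in>A. smult c (f x))"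
  by (induct A rule: infinite_finite_induct) (auto simp: smult_add_right)

lemma x_monom: "[:0, 1:] * smult c (monom (1::'a) k) = smult c (monom 1 (Suc k))"
  by (simp add: monom_Suc)

lemma rec_poly: "[:0, 1:] * vpoly m s q n = vpoly m s q (Suc n) + smult (dco m s q n) (vpoly m s q (n - 1))"
proof -
  have pt: "smult (Ac m s q n k) (monom 1 (Suc (n - 2 * k))) =
      smult (Ac m s q (Suc n) k) (monom 1 (Suc n - 2 * k)) +
      (if k = 0 then 0 else smult (dco m s q n * Ac m s q (n - 1) (k - 1)) (monom 1 (n - 1 - 2 * (k - 1))))" for k
  proof -
    have R: "Ac m s q n k = Ac m s q (Suc n) k + (if k = 0 then 0 else dco m s q n * Ac m s q (n - 1) (k - 1))"
      by (rule Rrec)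
    consider "2 * k \<le> n" | "2 * k = n + 1" | "n + 1 < 2 * k" by linarith
    then show ?thesis
    proof cases
      case 1
      have e: "Suc (n - 2 * k) = Suc n - 2 * k" using 1 by simp
      show ?thesis
      proof (cases "k = 0")
        case True then show ?thesis using R by simp
      next
        case False
        have e2: "n - 1 - 2 * (k - 1) = Suc n - 2 * k" using 1 False by simp
        show ?thesis unfolding e e2 using R False by (simp add: smult_add_left)
      qed
    next
      case 2
      have k0: "k \<noteq> 0" using 2 by simp
      have A0: "Ac m s q n k = 0" using 2 by (simp add: Ac_def)
      have e1: "Suc n - 2 * k = 0" "n - 1 - 2 * (k - 1) = 0" using 2 by simp_all
      show ?thesis unfolding e1 A0 using R A0 k0 by (simp add: smult_add_left[symmetric])
    next
      case 3
      have k0: "k \<noteq> 0" using 3 by simp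
      have A0: "Ac m s q n k = 0" "Ac m s q (Suc n) k = 0" using 3 by (auto simp add: Ac_def)
      show ?thesis using R A0 k0 by simp
    qed
  qed
  have "[:0, 1:] * vpoly m s q n = (\<Sum>k\<le>Suc n. smult (Ac m s q n k) (monom 1 (Suc (n - 2 * k))))"
    unfolding vpoly_alt[of n "Suc n", OF le_SucI[OF order_refl]] sum_distrib_left x_monom ..
  also have "\<dots> = (\<Sum>k\<le>Suc n. smult (Ac m s q (Suc n) k) (monom 1 (Suc n - 2 * k)))
     + (\<Sum>k\<le>Suc n. (if k = 0 then 0 else smult (dco m s q n * Ac m s q (n - 1) (k - 1)) (monom 1 (n - 1 - 2 * (k - 1)))))"
    unfolding pt sum.distrib ..
  also have "(\<Sum>k\<le>Suc n. (if k = 0 then 0 else smult (dco m s q n * Ac m s q (n - 1) (k - 1)) (monom 1 (n - 1 - 2 * (k - 1)))))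
      = (\<Sum>k\<le>n. smult (dco m s q n * Ac m s q (n - 1) k) (monom 1 (n - 1 - 2 * k)))"
    unfolding sum.atMost_Suc_shift by simp
  also have "\<dots> = smult (dco m s q n) (vpoly m s q (n - 1))"
    unfolding vpoly_alt[of "n - 1" n, OF diff_le_self] smult_sum_right by (simp add: smult_smult)
  finally show ?thesis using vpoly_alt[of "Suc n" "Suc n" m s, OF order_refl] by simp
qed

lemma inversion: "monom 1 n = (\<Sum>j\<le>n. smult (Bc m s q n j) (vpoly m s q (n - 2 * j)))"
proof (induction n)
  case 0
  then show ?case by (simp add: Bc_0 vpoly_def)
next
  case (Suc n)
  have B0: "Bc m s q n j = 0" if "n < 2 * j" for j using that by (simp add: Bc_def)
  have "monom 1 (Suc n) = [:0, 1:] * monom (1::'a) n" using x_monom[of 1 n] by simp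
  also have "\<dots> = (\<Sum>j\<le>n. smult (Bc m s q n j) ([:0, 1:] * vpoly m s q (n - 2 * j)))"
    unfolding Suc.IH sum_distrib_left by (simp add: mult_smult_right)
  also have "\<dots> = (\<Sum>j\<le>n. smult (Bc m s q n j) (vpoly m s q (Suc (n - 2 * j))))
      + (\<Sum>j\<le>n. smult (dco m s q (n - 2 * j) * Bc m s q n j) (vpoly m s q (n - 2 * j - 1)))"
    unfolding rec_poly smult_add_right sum.distrib by (simp add: smult_smult mult.commute)
  also have "(\<Sum>j\<le>n. smult (Bc m s q n j) (vpoly m s q (Suc (n - 2 * j))))
      = (\<Sum>j\<le>Suc n. smult (Bc m s q n j) (vpoly m s q (Suc n - 2 * j)))"
  proof -
    have "(\<Sum>j\<le>n. smult (Bc m s q n j) (vpoly m s q (Suc (n - 2 * j))))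
        = (\<Sum>j\<le>n. smult (Bc m s q n j) (vpoly m s q (Suc n - 2 * j)))"
    proof (rule sum.cong[OF refl])
      fix j assume "j \<in> {..n}"
      show "smult (Bc m s q n j) (vpoly m s q (Suc (n - 2 * j))) = smult (Bc m s q n j) (vpoly m s q (Suc n - 2 * j))"
      proof (cases "2 * j \<le> n")
        case True then have "Suc (n - 2 * j) = Suc n - 2 * j" by simp
        then show ?thesis by simp
      next
        case False then show ?thesis using B0[of j] by simp
      qed
    qed
    also have "\<dots> = (\<Sum>j\<le>Suc n. smult (Bc m s q n j) (vpoly m s q (Suc n - 2 * j)))"
      using B0[of "Suc n"] by simp
    finally show ?thesis .
  qed
  also have "(\<Sum>j\<le>n. smult (dco m s q (n - 2 * j) * Bc m s q n j) (vpoly m s q (n - 2 * j - 1)))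
     = (\<Sum>j\<le>Suc n. (if j = 0 then 0 else smult (dco m s q (n + 2 - 2 * j) * Bc m s q n (j - 1)) (vpoly m s q (Suc n - 2 * j))))"
  proof -
    have e: "\<And>i. n + 2 - 2 * Suc i = n - 2 * i" "\<And>i. Suc n - 2 * Suc i = n - 2 * i - 1" "\<And>i. Suc (Suc n) - 2 * Suc i = n - 2 * i" by simp_all
    show ?thesis unfolding sum.atMost_Suc_shift by (simp add: e del: mult_Suc_right)
  qed
  also have "(\<Sum>j\<le>Suc n. smult (Bc m s q n j) (vpoly m s q (Suc n - 2 * j)))
     + (\<Sum>j\<le>Suc n. (if j = 0 then 0 else smult (dco m s q (n + 2 - 2 * j) * Bc m s q n (j - 1)) (vpoly m s q (Suc n - 2 * j))))
     = (\<Sum>j\<le>Suc n. smult (Bc m s q (Suc n) j) (vpoly m s q (Suc n - 2 * j)))"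
    unfolding sum.distrib[symmetric] by (rule sum.cong[OF refl]) (simp add: Brec[of m s n] smult_add_left)
  finally show ?case .
qed

lemma part1: "monom 1 n =
            (\<Sum>k=0..n div 2.
               smult ((qfact q n / (qfact q k * qfact q (n - 2 * k)))
                      * (qfact q (n + m - 2 * k) / qfact q (n + m - k))
                      * (q ^ k * s ^ k
                         / (qpoch (- q) q k * qpoch (- (q ^ (n + m + 1 - 2 * k))) q k)))
                     (vpoly m s q (n - 2 * k)))"
proof -
  have "(\<Sum>k=0..n div 2.
               smult ((qfact q n / (qfact q k * qfact q (n - 2 * k)))
                      * (qfact q (n + m - 2 * k) / qfact q (n + m - k))
                      * (q ^ k * s ^ k
                         / (qpoch (- q) q k * qpoch (- (q ^ (n + m + 1 - 2 * k))) q k)))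
                     (vpoly m s q (n - 2 * k)))
     = (\<Sum>k=0..n div 2. smult (Bc m s q n k) (vpoly m s q (n - 2 * k)))"
    by (rule sum.cong[OF refl], subst Bc_conv) auto
  also have "\<dots> = (\<Sum>k\<le>n. smult (Bc m s q n k) (vpoly m s q (n - 2 * k)))"
    by (rule sum.mono_neutral_left) (auto simp: Bc_def)
  finally show ?thesis using inversion[of n m s] by simp
qed

end

lemma lin_zero: "lin_functional \<Phi> \<Longrightarrow> \<Phi> 0 = 0"
  unfolding lin_functional_def by (metis add_cancel_right_right add_0)

lemma lin_sum: "lin_functional \<Phi> \<Longrightarrow> \<Phi> (sum f A) = (\<Sum>x\<in>A. \<Phi> (f x))"
proof (induct A rule: infinite_finite_induct)
  case (infinite A) then show ?case using lin_zero by simp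
next
  case empty then show ?case using lin_zero by simp
next
  case (insert x F) then show ?case unfolding lin_functional_def by simp
qed

theorem mainTheorem13:
  fixes q s :: "'a::field"
  assumes qint_nz: "\<And>j. j \<ge> 1 \<Longrightarrow> qint q j \<noteq> 0"
      and qpow_nz: "\<And>j. j \<ge> 1 \<Longrightarrow> 1 + q ^ j \<noteq> 0"
  shows "(\<forall>m n. monom 1 n =
            (\<Sum>k=0..n div 2.
               smult ((qfact q n / (qfact q k * qfact q (n - 2 * k)))
                      * (qfact q (n + m - 2 * k) / qfact q (n + m - k))
                      * (q ^ k * s ^ k
                         / (qpoch (- q) q k * qpoch (- (q ^ (n + m + 1 - 2 * k))) q k)))
                     (vpoly m s q (n - 2 * k))))
       \<and> (\<forall>m (\<Phi> :: 'a poly \<Rightarrow> 'a).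
            lin_functional \<Phi> \<longrightarrow>
            (\<forall>n. \<Phi> (vpoly m 1 q n) = (if n = 0 then 1 else 0)) \<longrightarrow>
            (\<forall>n. \<Phi> (monom 1 (2 * n + 1)) = 0 \<and>
                 \<Phi> (monom 1 (2 * n)) =
                   q ^ n / (qpoch (- q) q n * qpoch (- (q ^ (m + 1))) q n)
                   * (qfact q (2 * n) * qfact q m / (qfact q n * qfact q (m + n)))))"
proof -
  interpret qset q using assms by unfold_locales auto
  have P2: "\<Phi> (monom 1 (2 * n + 1)) = 0 \<and>
                 \<Phi> (monom 1 (2 * n)) =
                   q ^ n / (qpoch (- q) q n * qpoch (- (q ^ (m + 1))) q n)
                   * (qfact q (2 * n) * qfact q m / (qfact q n * qfact q (m + n)))"
    if L: "lin_functional \<Phi>" and V: "\<forall>n. \<Phi> (vpoly m 1 q n) = (if n = 0 then 1 else 0)" for m \<Phi> n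
  proof -
    have sm: "\<Phi> (smult c p) = c * \<Phi> p" for c p using L unfolding lin_functional_def by blast
    have PhiM: "\<Phi> (monom 1 N) = (\<Sum>j\<le>N. Bc m 1 q N j * (if N - 2 * j = 0 then 1 else 0))" for N
    proof -
      have "\<Phi> (monom 1 N) = \<Phi> (\<Sum>j\<le>N. smult (Bc m 1 q N j) (vpoly m 1 q (N - 2 * j)))"
        using inversion[of N m 1] by simp
      also have "\<dots> = (\<Sum>j\<le>N. \<Phi> (smult (Bc m 1 q N j) (vpoly m 1 q (N - 2 * j))))"
        by (rule lin_sum[OF L])
      also have "\<dots> = (\<Sum>j\<le>N. Bc m 1 q N j * (if N - 2 * j = 0 then 1 else 0))"
        unfolding sm using V by (simp del: diff_is_0_eq diff_is_0_eq')
      finally show ?thesis .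
    qed
    have odd: "\<Phi> (monom 1 (2 * n + 1)) = 0"
    proof -
      have "Bc m 1 q (2 * n + 1) j * (if 2 * n + 1 - 2 * j = 0 then 1 else 0) = 0" for j
      proof (cases "j \<le> n")
        case True then have "2 * n + 1 - 2 * j \<noteq> 0" by simp
        then show ?thesis by simp
      next
        case False then have "\<not> j \<le> (2 * n + 1) div 2" by simp
        then show ?thesis by (simp add: Bc_def)
      qed
      then show ?thesis unfolding PhiM by (intro sum.neutral) blast
    qed
    have even: "\<Phi> (monom 1 (2 * n)) = Bc m 1 q (2 * n) n"
    proof -
      have "(\<Sum>j\<le>2 * n. Bc m 1 q (2 * n) j * (if 2 * n - 2 * j = 0 then 1 else 0))
          = (\<Sum>j\<le>2 * n. if j = n then Bc m 1 q (2 * n) n else 0)"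
      proof (rule sum.cong[OF refl])
        fix j assume "j \<in> {..2 * n}"
        show "Bc m 1 q (2 * n) j * (if 2 * n - 2 * j = 0 then 1 else 0) = (if j = n then Bc m 1 q (2 * n) n else 0)"
          by (cases "j < n"; cases "j = n") (auto simp: Bc_def)
      qed
      also have "\<dots> = Bc m 1 q (2 * n) n" by (simp add: sum.delta')
      finally show ?thesis unfolding PhiM .
    qed
    have "Bc m 1 q (2 * n) n = (qfact q (2 * n) / (qfact q n * qfact q (2 * n - 2 * n)))
                      * (qfact q (2 * n + m - 2 * n) / qfact q (2 * n + m - n))
                      * (q ^ n * 1 ^ n
                         / (qpoch (- q) q n * qpoch (- (q ^ (2 * n + m + 1 - 2 * n))) q n))"
      by (rule Bc_conv[symmetric]) simp
    also have "\<dots> = q ^ n / (qpoch (- q) q n * qpoch (- (q ^ (m + 1))) q n)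
                   * (qfact q (2 * n) * qfact q m / (qfact q n * qfact q (m + n)))"
    proof -
      have e: "2 * n + m - 2 * n = m" "2 * n + m - n = m + n" "2 * n + m + 1 - 2 * n = m + 1" by simp_all
      show ?thesis unfolding e by (simp add: ac_simps)
    qed
    finally show ?thesis using odd even by simp
  qed
  show ?thesis using part1 P2 by blast
qed

end
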